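(* Let $\theta$ be the Euler operator $\theta f(x)=xf'(x)$ on $\mathscr{A}(\mathbb{R})$ and let $P(\theta)=\sum_{k=0}^K a_k\theta^k$ with $a_0,\dots,a_K\in\mathbb{C}$ be a differential operator of degree $K\geq 2$ (i.e. $a_K\neq 0$). Then $P(\theta)$ does not generate a $C_0$-semigroup on $\mathscr{A}(\mathbb{R})$ in each of the following cases: (1) $\operatorname{Re}a_K=\dots=\operatorname{Re}a_{l+1}=0$ and $\operatorname{Re}a_l>0$ for some $l\geq 2$; (2) $a_K,\dots,a_2\in i\mathbb{Q}$.
   Context: $\mathscr{A}(\mathbb{R})$ denotes the space of real analytic functions on $\mathbb{R}$ with the inductive limit topology $\operatorname{ind}_{U\supset\mathbb{R}}H(U)$ ($U$ complex open neighbourhoods of $\mathbb{R}$, $H(U)$ with compact-open topology). A $C_0$-semigroup is a family $(T_t)_{t\ge0}$ of continuous linear operators on $\mathscr{A}(\mathbb{R})$ with $T_tT_s=T_{t+s}$, $T_0=I$, and $t\mapsto T_tf$ continuous for each $f$; its generator is $Af=\lim_{t\to0^+}(T_tf-f)/t$ on the domain where the limit exists; "$P(\theta)$ generates" means $P(\theta)$ (with domain $\mathscr{A}(\mathbb{R})$) is the generator. $\theta^0$ is the identity. *)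

theory Defs
  imports "HOL-Analysis.Analysis"
begin

definition real_analytic :: "(real \<Rightarrow> complex) set" where
  "real_analytic = {f. \<exists>U F. open U \<and> range complex_of_real \<subseteq> U \<and> F holomorphic_on U
                        \<and> (\<forall>x. F (complex_of_real x) = f x)}"

text \<open>Continuous seminorms of the locally convex inductive limit topology
  ind_{U \<supset> R} H(U): seminorms on A(R) whose pull-back to every H(U) (via restriction
  to the real line) is continuous for the compact-open topology, i.e. dominated by
  C times the sup-norm over some compact K \<subseteq> U.\<close>
definition cont_seminorm :: "((real \<Rightarrow> complex) \<Rightarrow> real) \<Rightarrow> bool" where
  "cont_seminorm p \<longleftrightarrow>
     (\<forall>f\<in>real_analytic. \<forall>g\<in>real_analytic. p (\<lambda>x. f x + g x) \<le> p f + p g) \<and>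
     (\<forall>f\<in>real_analytic. \<forall>c::complex. p (\<lambda>x. c * f x) = cmod c * p f) \<and>
     (\<forall>U. open U \<and> range complex_of_real \<subseteq> U \<longrightarrow>
        (\<exists>K C. compact K \<and> K \<subseteq> U \<and>
           (\<forall>F B. F holomorphic_on U \<and> 0 \<le> B \<and> (\<forall>z\<in>K. cmod (F z) \<le> B) \<longrightarrow>
                  p (\<lambda>x. F (complex_of_real x)) \<le> C * B)))"

definition tendsto_A :: "('b \<Rightarrow> (real \<Rightarrow> complex)) \<Rightarrow> (real \<Rightarrow> complex) \<Rightarrow> 'b filter \<Rightarrow> bool" where
  "tendsto_A g h F \<longleftrightarrow> (\<forall>p. cont_seminorm p \<longrightarrow> ((\<lambda>t. p (\<lambda>x. g t x - h x)) \<longlongrightarrow> 0) F)"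

definition cont_linear_op :: "((real \<Rightarrow> complex) \<Rightarrow> (real \<Rightarrow> complex)) \<Rightarrow> bool" where
  "cont_linear_op T \<longleftrightarrow>
     (\<forall>f\<in>real_analytic. T f \<in> real_analytic) \<and>
     (\<forall>f\<in>real_analytic. \<forall>g\<in>real_analytic. T (\<lambda>x. f x + g x) = (\<lambda>x. T f x + T g x)) \<and>
     (\<forall>f\<in>real_analytic. \<forall>c::complex. T (\<lambda>x. c * f x) = (\<lambda>x. c * T f x)) \<and>
     (\<forall>p. cont_seminorm p \<longrightarrow> cont_seminorm (\<lambda>f. p (T f)))"

definition C0_semigroup :: "(real \<Rightarrow> (real \<Rightarrow> complex) \<Rightarrow> (real \<Rightarrow> complex)) \<Rightarrow> bool" where
  "C0_semigroup T \<longleftrightarrow>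
     (\<forall>t\<ge>0. cont_linear_op (T t)) \<and>
     (\<forall>t\<ge>0. \<forall>s\<ge>0. \<forall>f\<in>real_analytic. T t (T s f) = T (t + s) f) \<and>
     (\<forall>f\<in>real_analytic. T 0 f = f) \<and>
     (\<forall>f\<in>real_analytic. \<forall>t0\<ge>0. tendsto_A (\<lambda>t. T t f) (T t0 f) (at t0 within {0..}))"

text \<open>The generator of T has domain all of A(R) and equals the operator A.\<close>
definition generates :: "((real \<Rightarrow> complex) \<Rightarrow> (real \<Rightarrow> complex)) \<Rightarrow>
    (real \<Rightarrow> (real \<Rightarrow> complex) \<Rightarrow> (real \<Rightarrow> complex)) \<Rightarrow> bool" where
  "generates A T \<longleftrightarrow> C0_semigroup T \<and>
     (\<forall>f\<in>real_analytic.
        tendsto_A (\<lambda>t. (\<lambda>x. (T t f x - f x) / complex_of_real t)) (A f) (at_right 0))"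

definition euler_op :: "(real \<Rightarrow> complex) \<Rightarrow> (real \<Rightarrow> complex)" where
  "euler_op f = (\<lambda>x. complex_of_real x * vector_derivative f (at x))"

definition poly_euler :: "(nat \<Rightarrow> complex) \<Rightarrow> nat \<Rightarrow> (real \<Rightarrow> complex) \<Rightarrow> (real \<Rightarrow> complex)" where
  "poly_euler a K f = (\<lambda>x. \<Sum>k\<le>K. a k * (euler_op ^^ k) f x)"

end

theory Submission
  imports Defs "HOL-Computational_Algebra.Polynomial"
begin


definition mono_fn :: "nat \<Rightarrow> real \<Rightarrow> complex" where
  "mono_fn m = (\<lambda>x. (complex_of_real x) ^ m)"

lemma poly_in_RA: "(\<lambda>x. \<Sum>m<k. w m * (complex_of_real x) ^ m) \<in> real_analytic"
  unfolding real_analytic_def mem_Collect_eq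
  by (rule exI[of _ UNIV], rule exI[of _ "\<lambda>z. \<Sum>m<k. w m * z ^ m"]) (auto intro!: holomorphic_intros)

lemma mono_in_RA: "mono_fn m \<in> real_analytic"
  unfolding real_analytic_def mono_fn_def mem_Collect_eq
  by (rule exI[of _ UNIV], rule exI[of _ "\<lambda>z. z ^ m"]) (auto intro!: holomorphic_intros)

lemma euler_mono: "euler_op (mono_fn m) = (\<lambda>x. of_nat m * mono_fn m x)"
proof
  fix x :: real
  have d: "((\<lambda>x. (complex_of_real x) ^ m) has_vector_derivative (of_nat m * (complex_of_real x) ^ (m - 1))) (at x)"
    proof -
    have "((\<lambda>z. z ^ m) has_field_derivative (of_nat m * (complex_of_real x) ^ (m - 1))) (at (complex_of_real x))"
      by (auto intro!: derivative_eq_intros)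
    from has_vector_derivative_real_field[OF this] show ?thesis by simp
  qed
  have "vector_derivative (mono_fn m) (at x) = of_nat m * (complex_of_real x) ^ (m - 1)"
    unfolding mono_fn_def using d by (rule vector_derivative_at)
  then show "euler_op (mono_fn m) x = of_nat m * mono_fn m x"
    unfolding euler_op_def mono_fn_def
    by (cases m) (auto simp: algebra_simps)
qed

lemma euler_pow_mono: "(euler_op ^^ k) (mono_fn m) = (\<lambda>x. of_nat m ^ k * mono_fn m x)"
proof (induction k)
  case 0 then show ?case by simp
next
  case (Suc k)
  have "euler_op (\<lambda>x. c * mono_fn m x) = (\<lambda>x. c * euler_op (mono_fn m) x)" for c
  proof
    fix x
    have d: "((\<lambda>x. (complex_of_real x) ^ m) has_vector_derivative (of_nat m * (complex_of_real x) ^ (m - 1))) (at x)"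
      proof -
    have "((\<lambda>z. z ^ m) has_field_derivative (of_nat m * (complex_of_real x) ^ (m - 1))) (at (complex_of_real x))"
      by (auto intro!: derivative_eq_intros)
    from has_vector_derivative_real_field[OF this] show ?thesis by simp
  qed
    have "vector_derivative (\<lambda>x. c * mono_fn m x) (at x) = c * (of_nat m * (complex_of_real x) ^ (m - 1))"
      unfolding mono_fn_def by (rule vector_derivative_at) (rule has_vector_derivative_mult_right[OF d])
    moreover have "vector_derivative (mono_fn m) (at x) = of_nat m * (complex_of_real x) ^ (m - 1)"
      unfolding mono_fn_def using d by (rule vector_derivative_at)
    ultimately show "euler_op (\<lambda>x. c * mono_fn m x) x = c * euler_op (mono_fn m) x"
      unfolding euler_op_def by simp
  qed
  note h = this[of "of_nat m ^ k"]
  have "(euler_op ^^ Suc k) (mono_fn m) = euler_op (\<lambda>x. of_nat m ^ k * mono_fn m x)"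
    using Suc by simp
  also have "\<dots> = (\<lambda>x. of_nat m ^ k * (of_nat m * mono_fn m x))" by (simp add: h euler_mono)
  finally show ?case by (simp add: mult_ac)
qed

definition Pval :: "(nat \<Rightarrow> complex) \<Rightarrow> nat \<Rightarrow> nat \<Rightarrow> complex" where
  "Pval a K m = (\<Sum>k\<le>K. a k * of_nat m ^ k)"

lemma poly_euler_mono: "poly_euler a K (mono_fn m) = (\<lambda>x. Pval a K m * mono_fn m x)"
  unfolding poly_euler_def Pval_def euler_pow_mono by (auto simp: sum_distrib_left mult_ac)

lemma eval_seminorm: "cont_seminorm (\<lambda>g. cmod (g y))"
  unfolding cont_seminorm_def
proof (intro conjI ballI allI impI)
  fix f g :: "real \<Rightarrow> complex"
  show "cmod (f y + g y) \<le> cmod (f y) + cmod (g y)" by (rule norm_triangle_ineq)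
next
  fix f :: "real \<Rightarrow> complex" and c
  show "cmod (c * f y) = cmod c * cmod (f y)" by (simp add: norm_mult)
next
  fix U :: "complex set"
  assume U: "open U \<and> range complex_of_real \<subseteq> U"
  show "\<exists>K C. compact K \<and> K \<subseteq> U \<and> (\<forall>F B. F holomorphic_on U \<and> 0 \<le> B \<and> (\<forall>z\<in>K. cmod (F z) \<le> B) \<longrightarrow>
           cmod (F (complex_of_real y)) \<le> C * B)"
    using U by (intro exI[of _ "{complex_of_real y}"] exI[of _ 1]) auto
qed

lemma comp_seminorm:
  assumes "cont_linear_op T" "cont_seminorm p"
  shows "cont_seminorm (\<lambda>f. p (T f))"
  using assms unfolding cont_linear_op_def by blast


lemma dini_eps:
  fixes v :: "real \<Rightarrow> complex"
  assumes cont: "continuous_on {0..} v" and v0: "v 0 = 0"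
    and der: "\<forall>s\<ge>0. ((\<lambda>h. (v (s+h) - v s) / of_real h) \<longlongrightarrow> 0) (at_right 0)"
    and b: "b > 0" and e: "\<epsilon> > 0"
  shows "norm (v b) \<le> \<epsilon> * b"
proof -
  define A where "A = {s\<in>{0..b}. \<forall>\<tau>\<in>{0..s}. norm (v \<tau>) \<le> \<epsilon> * \<tau>}"
  have A0: "0 \<in> A" unfolding A_def using b v0 by auto
  have Ab: "bdd_above A" unfolding A_def by (auto intro: bdd_aboveI[of _ b])
  define s0 where "s0 = Sup A"
  have s0ge: "0 \<le> s0" unfolding s0_def using A0 Ab by (rule cSup_upper)
  have s0le: "s0 \<le> b" unfolding s0_def using A0 by (intro cSup_least) (auto simp: A_def)
  have i: "norm (v \<tau>) \<le> \<epsilon> * \<tau>" if tt: "0 \<le> \<tau>" "\<tau> < s0" for \<tau>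
  proof -
    obtain s where "s \<in> A" "\<tau> < s" using less_cSupD[of A \<tau>] A0 tt unfolding s0_def by blast
    then show ?thesis using tt unfolding A_def by auto
  qed
  have ii: "norm (v s0) \<le> \<epsilon> * s0"
  proof (cases "s0 = 0")
    case True then show ?thesis using v0 by simp
  next
    case False
    then have pos: "0 < s0" using s0ge by simp
    define f where "f = (\<lambda>\<tau>. \<epsilon> * \<tau> - norm (v \<tau>))"
    have cf: "continuous_on {0..s0} f" unfolding f_def
      by (intro continuous_intros continuous_on_subset[OF cont]) auto
    have l1: "(f \<longlongrightarrow> f s0) (at s0 within {0..s0})"
      using cf pos by (simp add: continuous_on_def)
    have l2: "at s0 within {0..s0} \<noteq> bot"
      using pos by (simp add: at_within_Icc_at_left)
    have l3: "eventually (\<lambda>\<tau>. 0 \<le> f \<tau>) (at s0 within {0..s0})"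
      unfolding eventually_at_filter f_def using i by (auto intro!: always_eventually)
    have "0 \<le> f s0" using tendsto_lowerbound[OF l1 l3 l2] .
    then show ?thesis unfolding f_def by simp
  qed
  have s0A: "s0 \<in> A" unfolding A_def
  proof (intro CollectI conjI ballI)
    show "s0 \<in> {0..b}" using s0ge s0le by simp
  next
    fix \<tau> assume "\<tau> \<in> {0..s0}"
    then have "0 \<le> \<tau>" "\<tau> < s0 \<or> \<tau> = s0" by auto
    then show "norm (v \<tau>) \<le> \<epsilon> * \<tau>" using i ii by blast
  qed
  have "s0 = b"
  proof (rule ccontr)
    assume "s0 \<noteq> b"
    then have lt: "s0 < b" using s0le by simp
    have "eventually (\<lambda>h. norm ((v (s0+h) - v s0) / of_real h) < \<epsilon>) (at_right 0)"
      using der s0ge e tendsto_iff[THEN iffD1] by (fastforce simp: dist_norm)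
    then obtain d where d: "d > 0" "\<And>h. 0 < h \<Longrightarrow> h < d \<Longrightarrow> norm ((v (s0+h) - v s0) / of_real h) < \<epsilon>"
      unfolding eventually_at_right_field by auto
    define s1 where "s1 = s0 + min d (b - s0) / 2"
    have s1gt: "s1 > s0" using d lt unfolding s1_def by simp
    have "s1 \<in> A" unfolding A_def
    proof (intro CollectI conjI ballI)
      have m1: "min d (b - s0) \<le> b - s0" and m2: "min d (b - s0) > 0" using d lt by auto
      have "0 \<le> s1" using s0ge m2 unfolding s1_def by simp
      moreover have "s1 \<le> b" unfolding s1_def using m1 m2 lt by argo
      ultimately show "s1 \<in> {0..b}" by simp
    next
      fix \<tau> assume t: "\<tau> \<in> {0..s1}"
      show "norm (v \<tau>) \<le> \<epsilon> * \<tau>"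
      proof (cases "\<tau> \<le> s0")
        case True then show ?thesis using s0A t unfolding A_def by auto
      next
        case False
        define h where "h = \<tau> - s0"
        have "min d (b - s0) \<le> d" by simp
        then have h: "0 < h" "h < d" using False t d unfolding h_def s1_def atLeastAtMost_iff by argo+
        have "norm (v (s0+h) - v s0) / h < \<epsilon>" using d(2)[OF h] h by (simp add: norm_divide)
        then have "norm (v (s0+h) - v s0) < \<epsilon> * h" using h by (simp add: divide_less_eq)
        moreover have "norm (v (s0+h)) \<le> norm (v s0) + norm (v (s0+h) - v s0)"
          by (metis add.commute diff_add_cancel norm_triangle_ineq)
        ultimately show ?thesis using ii unfolding h_def by (simp add: algebra_simps)
      qed
    qed
    then have "s1 \<le> s0" unfolding s0_def using Ab by (rule cSup_upper)
    then show False using s1gt by simp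
  qed
  then show ?thesis using s0A unfolding A_def by auto
qed

lemma dini_zero:
  fixes v :: "real \<Rightarrow> complex"
  assumes cont: "continuous_on {0..} v" and v0: "v 0 = 0"
    and der: "\<forall>s\<ge>0. ((\<lambda>h. (v (s+h) - v s) / of_real h) \<longlongrightarrow> 0) (at_right 0)"
    and t: "t \<ge> 0"
  shows "v t = 0"
proof (cases "t = 0")
  case True then show ?thesis using v0 by simp
next
  case False
  then have tp: "t > 0" using t by simp
  show ?thesis
  proof (rule ccontr)
    assume "v t \<noteq> 0"
    then have np: "norm (v t) > 0" by simp
    have "norm (v t) \<le> (norm (v t) / (2*t)) * t"
      using dini_eps[OF cont v0 der tp, of "norm (v t) / (2*t)"] np tp by simp
    then show False using np tp by simp
  qed
qed


lemma ofreal_at_right: "filterlim (\<lambda>h::real. complex_of_real h) (at 0) (at_right 0)"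
proof -
  have "((\<lambda>h::real. complex_of_real h) \<longlongrightarrow> complex_of_real 0) (at_right 0)"
    by (intro tendsto_intros)
  moreover have "eventually (\<lambda>h::real. complex_of_real h \<noteq> 0) (at_right 0)"
    unfolding eventually_at_right_field by (intro exI[of _ 1]) auto
  ultimately show ?thesis by (simp add: filterlim_at)
qed

lemma exp_quot:
  "((\<lambda>h::real. (exp (- complex_of_real (s+h) * c) - exp (- complex_of_real s * c)) / of_real h)
     \<longlongrightarrow> - c * exp (- complex_of_real s * c)) (at_right 0)"
proof -
  define E where "E = (\<lambda>z::complex. exp (- z * c))"
  have "(E has_field_derivative (- c * exp (- complex_of_real s * c))) (at (complex_of_real s))"
    unfolding E_def by (auto intro!: derivative_eq_intros)
  then have "((\<lambda>k. (E (complex_of_real s + k) - E (complex_of_real s)) / k) \<longlongrightarrow> - c * exp (- complex_of_real s * c)) (at 0)"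
    by (simp add: DERIV_def)
  from filterlim_compose[OF this ofreal_at_right] show ?thesis
    unfolding E_def by (simp add: algebra_simps)
qed

lemma ode_right:
  fixes u :: "real \<Rightarrow> complex"
  assumes cont: "continuous_on {0..} u"
    and der: "\<forall>s\<ge>0. ((\<lambda>h. (u (s+h) - u s) / of_real h) \<longlongrightarrow> c * u s) (at_right 0)"
    and t: "t \<ge> 0"
  shows "u t = exp (of_real t * c) * u 0"
proof -
  define v where "v = (\<lambda>s. exp (- of_real s * c) * u s - u 0)"
  have cv: "continuous_on {0..} v" unfolding v_def
    by (intro continuous_intros cont)
  have v0: "v 0 = 0" unfolding v_def by simp
  have dv: "\<forall>s\<ge>0. ((\<lambda>h. (v (s+h) - v s) / of_real h) \<longlongrightarrow> 0) (at_right 0)"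
  proof (intro allI impI)
    fix s :: real assume s: "s \<ge> 0"
    have eq: "(v (s+h) - v s) / of_real h =
       exp (- of_real (s+h) * c) * ((u (s+h) - u s) / of_real h) +
       u s * ((exp (- complex_of_real (s+h) * c) - exp (- complex_of_real s * c)) / of_real h)" for h
      unfolding v_def by (simp add: field_simps diff_divide_distrib add_divide_distrib)
    have l1: "((\<lambda>h. exp (- of_real (s+h) * c)) \<longlongrightarrow> exp (- of_real (s+0) * c)) (at_right 0)"
      by (intro tendsto_intros)
    have "((\<lambda>h. exp (- of_real (s+h) * c) * ((u (s+h) - u s) / of_real h) +
       u s * ((exp (- complex_of_real (s+h) * c) - exp (- complex_of_real s * c)) / of_real h))
      \<longlongrightarrow> exp (- of_real (s+0) * c) * (c * u s) + u s * (- c * exp (- complex_of_real s * c))) (at_right 0)"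
      using der s by (intro tendsto_intros l1 exp_quot) auto
    then show "((\<lambda>h. (v (s+h) - v s) / of_real h) \<longlongrightarrow> 0) (at_right 0)"
      unfolding eq by (simp add: algebra_simps)
  qed
  have "v t = 0" by (rule dini_zero[OF cv v0 dv t])
  then show ?thesis unfolding v_def by (simp add: exp_minus field_simps)
qed


lemma scal_RA: "f \<in> real_analytic \<Longrightarrow> (\<lambda>x. c * f x) \<in> real_analytic"
  unfolding real_analytic_def mem_Collect_eq
proof (elim exE conjE)
  fix U F assume "open U" "range complex_of_real \<subseteq> U" "F holomorphic_on U" "\<forall>x. F (complex_of_real x) = f x"
  then show "\<exists>U F. open U \<and> range complex_of_real \<subseteq> U \<and> F holomorphic_on U \<and> (\<forall>x. F (complex_of_real x) = c * f x)"
    by (intro exI[of _ U] exI[of _ "\<lambda>z. c * F z"]) (auto intro!: holomorphic_intros)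
qed

lemma add_RA: "f \<in> real_analytic \<Longrightarrow> g \<in> real_analytic \<Longrightarrow> (\<lambda>x. f x + g x) \<in> real_analytic"
  unfolding real_analytic_def mem_Collect_eq
proof (elim exE conjE)
  fix U F V G assume a: "open U" "range complex_of_real \<subseteq> U" "F holomorphic_on U" "\<forall>x. F (complex_of_real x) = f x"
    "open V" "range complex_of_real \<subseteq> V" "G holomorphic_on V" "\<forall>x. G (complex_of_real x) = g x"
  have h1: "F holomorphic_on U \<inter> V" using a(3) by (rule holomorphic_on_subset) blast
  have h2: "G holomorphic_on U \<inter> V" using a(7) by (rule holomorphic_on_subset) blast
  have "(\<lambda>z. F z + G z) holomorphic_on U \<inter> V" using h1 h2 by (rule holomorphic_on_add)
  moreover have "open (U \<inter> V)" using a by blast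
  moreover have "range complex_of_real \<subseteq> U \<inter> V" using a by blast
  moreover have "\<forall>x. F (complex_of_real x) + G (complex_of_real x) = f x + g x" using a by simp
  ultimately show "\<exists>U F. open U \<and> range complex_of_real \<subseteq> U \<and> F holomorphic_on U \<and> (\<forall>x. F (complex_of_real x) = f x + g x)"
    by blast
qed

lemma lin2:
  assumes T: "cont_linear_op T" and f: "f \<in> real_analytic" and g: "g \<in> real_analytic"
  shows "T (\<lambda>x. \<alpha> * f x + \<beta> * g x) = (\<lambda>x. \<alpha> * T f x + \<beta> * T g x)"
proof -
  have add: "\<forall>f\<in>real_analytic. \<forall>g\<in>real_analytic. T (\<lambda>x. f x + g x) = (\<lambda>x. T f x + T g x)"
    and sc: "\<forall>f\<in>real_analytic. \<forall>c::complex. T (\<lambda>x. c * f x) = (\<lambda>x. c * T f x)"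
    using T unfolding cont_linear_op_def by blast+
  have "T (\<lambda>x. \<alpha> * f x + \<beta> * g x) = (\<lambda>x. T (\<lambda>x. \<alpha> * f x) x + T (\<lambda>x. \<beta> * g x) x)"
    using add[rule_format, OF scal_RA[OF f] scal_RA[OF g]] .
  also have "\<dots> = (\<lambda>x. \<alpha> * T f x + \<beta> * T g x)" using sc f g by simp
  finally show ?thesis .
qed

lemma gen_mono:
  assumes gen: "generates (poly_euler a K) T" and t: "t \<ge> 0"
  shows "T t (mono_fn m) y = exp (of_real t * Pval a K m) * mono_fn m y"
proof -
  define f where "f = mono_fn m"
  define c where "c = Pval a K m"
  have fRA: "f \<in> real_analytic" unfolding f_def by (rule mono_in_RA)
  have C0: "C0_semigroup T" and lim: "\<forall>f\<in>real_analytic.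
        tendsto_A (\<lambda>t. (\<lambda>x. (T t f x - f x) / complex_of_real t)) (poly_euler a K f) (at_right 0)"
    using gen unfolding generates_def by blast+
  have lin: "\<And>t. t \<ge> 0 \<Longrightarrow> cont_linear_op (T t)"
    and sg: "\<And>t s. t \<ge> 0 \<Longrightarrow> s \<ge> 0 \<Longrightarrow> T t (T s f) = T (t + s) f"
    and T0: "T 0 f = f"
    and ct: "\<And>t0. t0 \<ge> 0 \<Longrightarrow> tendsto_A (\<lambda>t. T t f) (T t0 f) (at t0 within {0..})"
    using C0 fRA unfolding C0_semigroup_def by blast+
  have Af: "poly_euler a K f = (\<lambda>x. c * f x)" unfolding f_def c_def by (rule poly_euler_mono)
  define u where "u = (\<lambda>s. T s f y)"
  have cont: "continuous_on {0..} u"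
    unfolding continuous_on_def
  proof
    fix s :: real assume "s \<in> {0..}"
    then have "tendsto_A (\<lambda>t. T t f) (T s f) (at s within {0..})" using ct by auto
    then have "((\<lambda>t. cmod (T t f y - T s f y)) \<longlongrightarrow> 0) (at s within {0..})"
      unfolding tendsto_A_def using eval_seminorm[of y] by blast
    then have "((\<lambda>t. T t f y - T s f y) \<longlongrightarrow> 0) (at s within {0..})"
      by (simp add: tendsto_norm_zero_iff)
    then show "(u \<longlongrightarrow> u s) (at s within {0..})" unfolding u_def by (simp add: LIM_zero_iff)
  qed
  have der: "\<forall>s\<ge>0. ((\<lambda>h. (u (s+h) - u s) / of_real h) \<longlongrightarrow> c * u s) (at_right 0)"
  proof (intro allI impI)
    fix s :: real assume s: "s \<ge> 0"
    have p': "cont_seminorm (\<lambda>g. cmod (T s g y))" by (rule comp_seminorm[OF lin[OF s] eval_seminorm])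
    have L: "((\<lambda>h. cmod (T s (\<lambda>x. (T h f x - f x) / complex_of_real h - poly_euler a K f x) y)) \<longlongrightarrow> 0) (at_right 0)"
      using lim fRA p' unfolding tendsto_A_def by blast
    have E: "eventually (\<lambda>h. cmod (T s (\<lambda>x. (T h f x - f x) / complex_of_real h - poly_euler a K f x) y)
        = cmod ((u (s+h) - u s) / of_real h - c * u s)) (at_right 0)"
      unfolding eventually_at_right_field
    proof (intro exI[of _ 1] conjI allI impI)
      show "(0::real) < 1" by simp
    next
      fix h :: real assume h0: "0 < h" "h < 1"
      then have h: "0 < h \<and> h < 1" by simp
      have hRA: "T h f \<in> real_analytic" using lin[of h] h fRA unfolding cont_linear_op_def by auto
      have eqf: "(\<lambda>x. (T h f x - f x) / complex_of_real h - poly_euler a K f x)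
          = (\<lambda>x. (1 / of_real h) * T h f x + (- 1 / of_real h - c) * f x)"
        using h unfolding Af by (auto simp: field_simps)
      have "T s (\<lambda>x. (T h f x - f x) / complex_of_real h - poly_euler a K f x) y
          = (\<lambda>x. (1 / of_real h) * T s (T h f) x + (- 1 / of_real h - c) * T s f x) y"
        unfolding eqf lin2[OF lin[OF s] hRA fRA] by (rule refl)
      also have "\<dots> = (u (s+h) - u s) / of_real h - c * u s"
        unfolding u_def using sg[of s h] s h by (simp add: field_simps)
      finally show "cmod (T s (\<lambda>x. (T h f x - f x) / complex_of_real h - poly_euler a K f x) y)
        = cmod ((u (s+h) - u s) / of_real h - c * u s)" by simp
    qed
    have "((\<lambda>h. cmod ((u (s+h) - u s) / of_real h - c * u s)) \<longlongrightarrow> 0) (at_right 0)"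
      using L tendsto_cong[OF E] by simp
    then show "((\<lambda>h. (u (s+h) - u s) / of_real h) \<longlongrightarrow> c * u s) (at_right 0)"
      by (simp add: tendsto_norm_zero_iff LIM_zero_iff)
  qed
  have "u t = exp (of_real t * c) * u 0" by (rule ode_right[OF cont der t])
  then show ?thesis unfolding u_def c_def f_def using T0 unfolding f_def by simp
qed


lemma seminorm_bound_UNIV:
  assumes "cont_seminorm p"
  obtains R C where "R \<ge> 1" "\<And>m. p (mono_fn m) \<le> C * R ^ m"
proof -
  obtain Kc C where Kc: "compact Kc" and bnd: "\<forall>F B. F holomorphic_on UNIV \<and> 0 \<le> B \<and> (\<forall>z\<in>Kc. cmod (F z) \<le> B) \<longrightarrow>
           p (\<lambda>x. F (complex_of_real x)) \<le> C * B"
  proof -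
    have "\<forall>U. open U \<and> range complex_of_real \<subseteq> U \<longrightarrow>
        (\<exists>K C. compact K \<and> K \<subseteq> U \<and>
           (\<forall>F B. F holomorphic_on U \<and> 0 \<le> B \<and> (\<forall>z\<in>K. cmod (F z) \<le> B) \<longrightarrow>
                  p (\<lambda>x. F (complex_of_real x)) \<le> C * B))" using assms unfolding cont_seminorm_def by blast
    from this[rule_format, of UNIV] show ?thesis using that by auto
  qed
  obtain R0 where R0: "\<forall>z\<in>Kc. norm z \<le> R0" using compact_imp_bounded[OF Kc] by (auto simp: bounded_iff)
  define R where "R = max R0 1"
  have "p (mono_fn m) \<le> C * R ^ m" for m
  proof -
    have "\<forall>z\<in>Kc. cmod (z ^ m) \<le> R ^ m"
      using R0 unfolding R_def by (auto simp: norm_power intro!: power_mono)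
    moreover have "0 \<le> R ^ m" unfolding R_def by simp
    moreover have "(\<lambda>z::complex. z ^ m) holomorphic_on UNIV" by (auto intro!: holomorphic_intros)
    ultimately have "p (\<lambda>x. (complex_of_real x) ^ m) \<le> C * R ^ m" using bnd by blast
    then show ?thesis unfolding mono_fn_def .
  qed
  moreover have "R \<ge> 1" unfolding R_def by simp
  ultimately show ?thesis using that by blast
qed

lemma Re_Pval: "Re (Pval a K m) = (\<Sum>k\<le>K. Re (a k) * real m ^ k)"
  unfolding Pval_def by (simp add: Re_sum flip: of_nat_power)

lemma case1:
  assumes gen: "generates (poly_euler a K) T"
    and l: "2 \<le> l" "l \<le> K" "\<forall>k. l < k \<and> k \<le> K \<longrightarrow> Re (a k) = 0" "Re (a l) > 0"
  shows False
proof -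
  have lin: "cont_linear_op (T 1)" using gen unfolding generates_def C0_semigroup_def by auto
  have p: "cont_seminorm (\<lambda>g. cmod (T 1 g 1))" by (rule comp_seminorm[OF lin eval_seminorm])
  obtain R C where R: "R \<ge> 1" and b: "\<And>m. cmod (T 1 (mono_fn m) 1) \<le> C * R ^ m"
    using seminorm_bound_UNIV[OF p] by blast
  have b2: "exp (Re (Pval a K m)) \<le> C * R ^ m" for m
    using b[of m] gen_mono[OF gen, of 1 m 1] by (simp add: mono_fn_def norm_exp_eq_Re)
  define c where "c = Re (a l)"
  define A where "A = (\<Sum>k<l. \<bar>Re (a k)\<bar>)"
  have lower: "Re (Pval a K m) \<ge> c * real m ^ l - A * real m ^ (l - 1)" if m1: "m \<ge> 1" for m
  proof -
    have "Re (Pval a K m) = (\<Sum>k\<le>l. Re (a k) * real m ^ k)"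
      unfolding Re_Pval using l by (intro sum.mono_neutral_right) auto
    also have "\<dots> = (\<Sum>k<l. Re (a k) * real m ^ k) + c * real m ^ l"
      unfolding c_def by (simp add: lessThan_Suc_atMost[symmetric])
    also have "(\<Sum>k<l. Re (a k) * real m ^ k) \<ge> (\<Sum>k<l. - \<bar>Re (a k)\<bar> * real m ^ (l - 1))"
    proof (rule sum_mono)
      fix k assume "k \<in> {..<l}"
      then have "real m ^ k \<le> real m ^ (l - 1)" using m1 by (intro power_increasing) auto
      then have "\<bar>Re (a k)\<bar> * real m ^ k \<le> \<bar>Re (a k)\<bar> * real m ^ (l - 1)" by (simp add: mult_left_mono)
      moreover have "- \<bar>Re (a k)\<bar> * real m ^ k \<le> Re (a k) * real m ^ k"
        by (rule mult_right_mono) auto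
      ultimately show "- \<bar>Re (a k)\<bar> * real m ^ (l - 1) \<le> Re (a k) * real m ^ k" by linarith
    qed
    moreover have "(\<Sum>k<l. - \<bar>Re (a k)\<bar> * real m ^ (l - 1)) = - A * real m ^ (l - 1)"
      unfolding A_def by (simp add: sum_distrib_right sum_negf)
    ultimately show ?thesis by linarith
  qed
  have Cpos: "C > 0"
  proof -
    have "0 < exp (Re (Pval a K 0))" by simp
    also have "\<dots> \<le> C * R ^ 0" by (rule b2)
    finally show ?thesis by simp
  qed
  have cpos: "c > 0" using l unfolding c_def by simp
  have A0: "A \<ge> 0" unfolding A_def by (simp add: sum_nonneg)
  define m where "m = nat \<lceil>(A + ln R + \<bar>ln C\<bar> + 1) / c\<rceil> + 1"
  have m1: "real m \<ge> 1" unfolding m_def by simp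
  have "real m \<ge> (A + ln R + \<bar>ln C\<bar> + 1) / c" unfolding m_def by linarith
  then have cm: "c * real m - A \<ge> ln R + \<bar>ln C\<bar> + 1" using cpos by (simp add: field_simps)
  have lnR: "ln R \<ge> 0" using R by simp
  have "real m ^ 1 \<le> real m ^ (l - 1)" using m1 l by (intro power_increasing) auto
  then have "real m ^ (l - 1) \<ge> real m" by simp
  have "c * real m ^ l - A * real m ^ (l - 1) = real m ^ (l - 1) * (c * real m - A)"
    using l by (cases l) (auto simp: algebra_simps)
  also have "\<dots> \<ge> real m * (c * real m - A)"
    using \<open>real m ^ (l - 1) \<ge> real m\<close> cm lnR by (intro mult_right_mono) auto
  finally have "Re (Pval a K m) \<ge> real m * (c * real m - A)" using lower[of m] m1 by simp
  moreover have "real m * (c * real m - A) \<ge> real m * (ln R + \<bar>ln C\<bar> + 1)"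
    using cm m1 by (intro mult_left_mono) auto
  moreover have "real m * (ln R + \<bar>ln C\<bar> + 1) > ln C + real m * ln R"
  proof -
    have "real m * (ln R + \<bar>ln C\<bar> + 1) = real m * ln R + real m * (\<bar>ln C\<bar> + 1)" by (simp add: algebra_simps)
    moreover have "real m * (\<bar>ln C\<bar> + 1) \<ge> 1 * (\<bar>ln C\<bar> + 1)" using m1 by (intro mult_right_mono) auto
    moreover have "ln C \<le> \<bar>ln C\<bar>" by simp
    ultimately show ?thesis by argo
  qed
  ultimately have gt: "Re (Pval a K m) > ln C + real m * ln R" by linarith
  have "exp (Re (Pval a K m)) \<le> C * R ^ m" by (rule b2)
  also have "\<dots> = exp (ln C + real m * ln R)" using Cpos R by (simp add: exp_add exp_of_nat_mult)
  finally show False using gt by simp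
qed


definition ru :: "nat \<Rightarrow> int \<Rightarrow> complex" where
  "ru N a = exp (2 * of_real pi * \<i> * of_int a / of_nat N)"

lemma ru_add: "ru N (a + b) = ru N a * ru N b"
  unfolding ru_def by (simp add: distrib_left add_divide_distrib exp_add)

lemma ru_mult_nat: "ru N (int j * a) = ru N a ^ j"
  unfolding ru_def by (simp add: exp_of_nat_mult[symmetric] mult_ac)

lemma ru_eq_iff:
  assumes N: "N > 0"
  shows "ru N a = ru N b \<longleftrightarrow> int N dvd (a - b)"
proof
  assume "ru N a = ru N b"
  then obtain n :: int where n: "2 * of_real pi * \<i> * of_int a / of_nat N = 2 * of_real pi * \<i> * of_int b / of_nat N + complex_of_real (real_of_int (2 * n) * pi) * \<i>"
    unfolding ru_def exp_eq by blast
  have "complex_of_int a = of_int b + of_int n * of_nat N"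
  proof -
    have "(2 * of_real pi * \<i> / of_nat N) * (of_int a) = (2 * of_real pi * \<i> / of_nat N) * (of_int b + of_int n * of_nat N)"
      using n N by (simp add: field_simps)
    moreover have "(2 * of_real pi * \<i> / of_nat N) \<noteq> (0::complex)" using N by (simp add: pi_neq_zero)
    ultimately show ?thesis by simp
  qed
  then have "a = b + n * int N" by (metis of_int_add of_int_eq_iff of_int_mult of_int_of_nat_eq)
  then show "int N dvd (a - b)" by simp
next
  assume "int N dvd (a - b)"
  then obtain k where k: "a = b + int N * k" by (metis add_diff_cancel_left' diff_add_cancel dvdE)
  have "ru N a = ru N b * ru N (int N * k)" using k ru_add by simp
  also have "ru N (int N * k) = exp (2 * of_int k * of_real pi * \<i>)"
    unfolding ru_def using N by (simp add: field_simps)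
  also have "\<dots> = 1" using exp_integer_2pi[of "of_int k"] by (simp add: mult_ac)
  finally show "ru N a = ru N b" by simp
qed

lemma ru_sum:
  assumes N: "N > 0"
  shows "(\<Sum>j<N. ru N (int j * a)) = (if int N dvd a then of_nat N else 0)"
proof -
  have s: "(\<Sum>j<N. ru N (int j * a)) = (\<Sum>j<N. ru N a ^ j)" by (simp add: ru_mult_nat)
  show ?thesis
  proof (cases "int N dvd a")
    case True
    then have "ru N a = ru N 0" using ru_eq_iff[OF N] by simp
    then have "ru N a = 1" by (simp add: ru_def)
    then show ?thesis using True s by simp
  next
    case False
    then have "ru N a \<noteq> ru N 0" using ru_eq_iff[OF N] by simp
    then have ne: "ru N a \<noteq> 1" by (simp add: ru_def)
    have "ru N a ^ N = ru N (int N * a)" by (simp add: ru_mult_nat)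
    also have "\<dots> = ru N 0" using ru_eq_iff[OF N] by simp
    finally have "ru N a ^ N = 1" by (simp add: ru_def)
    then show ?thesis using False s ne by (simp add: sum_gp_strict)
  qed
qed

definition dftc :: "nat \<Rightarrow> (nat \<Rightarrow> complex) \<Rightarrow> nat \<Rightarrow> complex" where
  "dftc N c j = (\<Sum>r<N. c r * ru N (- (int j * int r))) / of_nat N"

lemma dft_inv:
  assumes N: "N > 0" and per: "\<And>m. c m = c (m mod N)"
  shows "c m = (\<Sum>j<N. dftc N c j * ru N (int j * int m))"
proof -
  have "(\<Sum>j<N. dftc N c j * ru N (int j * int m))
      = (\<Sum>j<N. \<Sum>r<N. c r * ru N (int j * (int m - int r))) / of_nat N"
    unfolding dftc_def sum_divide_distrib sum_distrib_right
    by (intro sum.cong refl) (simp add: mult.assoc ru_add[symmetric] algebra_simps)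
  also have "\<dots> = (\<Sum>r<N. c r * (\<Sum>j<N. ru N (int j * (int m - int r)))) / of_nat N"
    by (subst sum.swap) (simp add: sum_distrib_left)
  also have "\<dots> = (\<Sum>r<N. c r * (if int N dvd (int m - int r) then of_nat N else 0)) / of_nat N"
    by (simp add: ru_sum[OF N])
  also have "(\<Sum>r<N. c r * (if int N dvd (int m - int r) then of_nat N else 0)) =
      (\<Sum>r<N. if r = m mod N then c r * of_nat N else 0)"
  proof (intro sum.cong refl)
    fix r assume r: "r \<in> {..<N}"
    have "int N dvd (int m - int r) \<longleftrightarrow> r = m mod N"
    proof
      assume "int N dvd (int m - int r)"
      then have "int m mod int N = int r mod int N" by (simp add: mod_eq_dvd_iff)
      then show "r = m mod N" using r by (metis lessThan_iff mod_less of_nat_eq_iff zmod_int)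
    next
      assume "r = m mod N"
      then show "int N dvd (int m - int r)" by (simp add: mod_eq_dvd_iff zmod_int)
    qed
    then show "c r * (if int N dvd (int m - int r) then of_nat N else 0) = (if r = m mod N then c r * of_nat N else 0)"
      by simp
  qed
  also have "\<dots> = c (m mod N) * of_nat N" using N by (simp add: sum.delta)
  finally show ?thesis using N per[of m] by simp
qed


lemma exp_tail_bound:
  fixes v :: complex
  assumes "cmod v \<le> X"
  shows "cmod (exp v - (\<Sum>m<k. v ^ m /\<^sub>R fact m)) \<le> exp X - (\<Sum>m<k. X ^ m /\<^sub>R fact m)"
proof -
  have X0: "0 \<le> X" using assms norm_ge_zero order_trans by blast
  have s1: "(\<lambda>i. v ^ (i + k) /\<^sub>R fact (i + k)) sums (exp v - (\<Sum>m<k. v ^ m /\<^sub>R fact m))"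
    using sums_iff_shift[of "\<lambda>m. v ^ m /\<^sub>R fact m" k "exp v - (\<Sum>m<k. v ^ m /\<^sub>R fact m)"] exp_converges[of v] by simp
  have s2: "(\<lambda>i. X ^ (i + k) /\<^sub>R fact (i + k)) sums (exp X - (\<Sum>m<k. X ^ m /\<^sub>R fact m))"
    using sums_iff_shift[of "\<lambda>m. X ^ m /\<^sub>R fact m" k "exp X - (\<Sum>m<k. X ^ m /\<^sub>R fact m)"] exp_converges[of X] by simp
  have le: "norm (v ^ (i + k) /\<^sub>R fact (i + k)) \<le> X ^ (i + k) /\<^sub>R fact (i + k)" for i
    using assms by (simp add: norm_power divide_right_mono power_mono)
  have sn: "summable (\<lambda>i. norm (v ^ (i + k) /\<^sub>R fact (i + k)))"
    by (rule summable_comparison_test[OF _ sums_summable[OF s2]]) (use le in auto)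
  have "cmod (exp v - (\<Sum>m<k. v ^ m /\<^sub>R fact m)) = norm (\<Sum>i. v ^ (i + k) /\<^sub>R fact (i + k))"
    using s1 by (simp add: sums_iff)
  also have "\<dots> \<le> (\<Sum>i. norm (v ^ (i + k) /\<^sub>R fact (i + k)))" by (rule summable_norm[OF sn])
  also have "\<dots> \<le> (\<Sum>i. X ^ (i + k) /\<^sub>R fact (i + k))"
    by (rule suminf_le[OF le sn sums_summable[OF s2]])
  also have "\<dots> = exp X - (\<Sum>m<k. X ^ m /\<^sub>R fact m)" using s2 by (simp add: sums_iff)
  finally show ?thesis .
qed

lemma exp_tail_lim:
  "((\<lambda>k. exp (X::real) - (\<Sum>m<k. X ^ m /\<^sub>R fact m)) \<longlongrightarrow> 0) sequentially"
proof -
  have "((\<lambda>k. (\<Sum>m<k. X ^ m /\<^sub>R fact m)) \<longlongrightarrow> exp X) sequentially"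
    using exp_converges[of X] by (simp add: sums_def)
  then have "((\<lambda>k. exp X - (\<Sum>m<k. X ^ m /\<^sub>R fact m)) \<longlongrightarrow> exp X - exp X) sequentially"
    by (intro tendsto_intros)
  then show ?thesis by simp
qed

lemma lin_sum:
  assumes T: "cont_linear_op T"
  shows "T (\<lambda>x. \<Sum>m<k. w m * mono_fn m x) = (\<lambda>x. \<Sum>m<k. w m * T (mono_fn m) x)"
proof (induction k)
  case 0
  have "T (\<lambda>x. 0 * mono_fn 0 x + 0 * mono_fn 0 x) = (\<lambda>x. 0 * T (mono_fn 0) x + 0 * T (mono_fn 0) x)"
    by (rule lin2[OF T mono_in_RA mono_in_RA])
  then show ?case by simp
next
  case (Suc k)
  have RA: "(\<lambda>x. \<Sum>m<k. w m * mono_fn m x) \<in> real_analytic"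
    using poly_in_RA[of w k] unfolding mono_fn_def .
  have "T (\<lambda>x. \<Sum>m<Suc k. w m * mono_fn m x) = T (\<lambda>x. 1 * (\<Sum>m<k. w m * mono_fn m x) + w k * mono_fn k x)"
    by simp
  also have "\<dots> = (\<lambda>x. 1 * T (\<lambda>x. \<Sum>m<k. w m * mono_fn m x) x + w k * T (mono_fn k) x)"
    by (rule lin2[OF T RA mono_in_RA])
  finally show ?case using Suc by simp
qed



lemma strip_bound:
  assumes T: "cont_linear_op T" and mu: "\<And>m. T (mono_fn m) = (\<lambda>x. \<mu> m * mono_fn m x)"
    and conv: "\<And>n::nat. ((\<lambda>k. \<Sum>m<k. ((- \<i> * of_nat n) ^ m /\<^sub>R fact m) * \<mu> m * (complex_of_real y) ^ m) \<longlongrightarrow> G n) sequentially"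
    and e: "\<epsilon> > 0"
  shows "\<exists>C. \<forall>n. cmod (G n) \<le> C * exp (real n * \<epsilon>)"
proof -
  have p: "cont_seminorm (\<lambda>g. cmod (T g y))" by (rule comp_seminorm[OF T eval_seminorm])
  define U where "U = {z::complex. \<bar>Im z\<bar> < \<epsilon>}"
  have oU: "open U" unfolding U_def by (intro open_Collect_less continuous_intros)
  have rU: "range complex_of_real \<subseteq> U" unfolding U_def using e by auto
  have "\<forall>U. open U \<and> range complex_of_real \<subseteq> U \<longrightarrow>
        (\<exists>K C. compact K \<and> K \<subseteq> U \<and>
           (\<forall>F B. F holomorphic_on U \<and> 0 \<le> B \<and> (\<forall>z\<in>K. cmod (F z) \<le> B) \<longrightarrow>
                  cmod (T (\<lambda>x. F (complex_of_real x)) y) \<le> C * B))" using p unfolding cont_seminorm_def by blast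
  from this[rule_format, of U] oU rU obtain Kc C where Kc: "compact Kc" "Kc \<subseteq> U"
    and bnd: "\<And>F B. F holomorphic_on U \<Longrightarrow> 0 \<le> B \<Longrightarrow> (\<forall>z\<in>Kc. cmod (F z) \<le> B) \<Longrightarrow>
                  cmod (T (\<lambda>x. F (complex_of_real x)) y) \<le> C * B" by blast
  obtain R where R: "\<forall>z\<in>Kc. norm z \<le> R" and R0: "R > 0" using compact_imp_bounded[OF Kc(1)] by (auto simp: bounded_pos)
  have "cmod (G n) \<le> C * exp (real n * \<epsilon>)" for n
  proof -
    define w where "w = - \<i> * of_nat n"
    define X where "X = real n * R"
    define B where "B = (\<lambda>k. exp (real n * \<epsilon>) + (exp X - (\<Sum>m<k. X ^ m /\<^sub>R fact m)))"
    have step: "cmod (\<Sum>m<k. (w ^ m /\<^sub>R fact m) * \<mu> m * (complex_of_real y) ^ m) \<le> C * B k" for k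
    proof -
      define F where "F = (\<lambda>z. \<Sum>m<k. (w ^ m /\<^sub>R fact m) * z ^ m)"
      have hol: "F holomorphic_on U" unfolding F_def by (auto intro!: holomorphic_intros)
      have Fz: "cmod (F z) \<le> B k" if z: "z \<in> Kc" for z
      proof -
        have Fe: "F z = (\<Sum>m<k. (w * z) ^ m /\<^sub>R fact m)"
          unfolding F_def by (simp add: power_mult_distrib scaleR_conv_of_real mult_ac)
        have "cmod (w * z) \<le> X" unfolding X_def w_def using R z
          by (simp add: norm_mult mult_left_mono)
        then have t: "cmod (exp (w * z) - F z) \<le> exp X - (\<Sum>m<k. X ^ m /\<^sub>R fact m)"
          unfolding Fe by (rule exp_tail_bound)
        have "Im z < \<epsilon>" using z Kc unfolding U_def by auto
        then have "real n * Im z \<le> real n * \<epsilon>" by (intro mult_left_mono) auto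
        moreover have "cmod (exp (w * z)) = exp (real n * Im z)"
          unfolding w_def by (simp add: norm_exp_eq_Re)
        ultimately have "cmod (exp (w * z)) \<le> exp (real n * \<epsilon>)" by simp
        moreover have "cmod (F z) \<le> cmod (exp (w * z)) + cmod (exp (w * z) - F z)"
          using norm_triangle_sub[of "F z" "exp (w * z)"] by (simp add: norm_minus_commute)
        ultimately show ?thesis using t unfolding B_def by linarith
      qed
      have B0: "0 \<le> B k"
      proof -
        have "cmod (0::complex) \<le> X" unfolding X_def using R0 by simp
        from order_trans[OF norm_ge_zero exp_tail_bound[OF this, of k]]
        have "0 \<le> exp X - (\<Sum>m<k. X ^ m /\<^sub>R fact m)" .
        then show ?thesis unfolding B_def by (simp add: add_nonneg_nonneg)
      qed
      have "cmod (T (\<lambda>x. F (complex_of_real x)) y) \<le> C * B k" using bnd[OF hol B0] Fz by blast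
      moreover have "T (\<lambda>x. F (complex_of_real x)) y = (\<Sum>m<k. (w ^ m /\<^sub>R fact m) * \<mu> m * (complex_of_real y) ^ m)"
      proof -
        have "(\<lambda>x. F (complex_of_real x)) = (\<lambda>x. \<Sum>m<k. (w ^ m /\<^sub>R fact m) * mono_fn m x)"
          unfolding F_def mono_fn_def by simp
        then show ?thesis using lin_sum[OF T, of "\<lambda>m. w ^ m /\<^sub>R fact m" k] mu
          by (simp add: mono_fn_def mult_ac)
      qed
      ultimately show ?thesis by simp
    qed
    have l1: "((\<lambda>k. cmod (\<Sum>m<k. (w ^ m /\<^sub>R fact m) * \<mu> m * (complex_of_real y) ^ m)) \<longlongrightarrow> cmod (G n)) sequentially"
      using conv[of n] unfolding w_def by (intro tendsto_intros)
    have l2: "((\<lambda>k. C * B k) \<longlongrightarrow> C * (exp (real n * \<epsilon>) + 0)) sequentially"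
      unfolding B_def by (intro tendsto_intros exp_tail_lim)
    show ?thesis using tendsto_le[OF _ l2 l1] step by simp
  qed
  then show ?thesis by blast
qed


lemma conv_lemma:
  fixes b d :: "nat \<Rightarrow> complex" and A w v :: complex
  assumes mu: "\<And>m. \<mu> m = A * (\<Sum>j<N. b j * d j ^ m)"
  shows "((\<lambda>k. \<Sum>m<k. (w ^ m /\<^sub>R fact m) * \<mu> m * v ^ m) \<longlongrightarrow> A * (\<Sum>j<N. b j * exp (w * d j * v))) sequentially"
proof -
  have eq: "(\<Sum>m<k. (w ^ m /\<^sub>R fact m) * \<mu> m * v ^ m) = A * (\<Sum>j<N. b j * (\<Sum>m<k. (w * d j * v) ^ m /\<^sub>R fact m))" for k
  proof -
    have "(\<Sum>m<k. (w ^ m /\<^sub>R fact m) * \<mu> m * v ^ m) = (\<Sum>m<k. \<Sum>j<N. A * (b j * ((w * d j * v) ^ m /\<^sub>R fact m)))"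
      unfolding mu by (intro sum.cong refl) (simp add: sum_distrib_left sum_distrib_right power_mult_distrib scaleR_conv_of_real mult_ac)
    also have "\<dots> = A * (\<Sum>j<N. b j * (\<Sum>m<k. (w * d j * v) ^ m /\<^sub>R fact m))"
      by (subst sum.swap) (simp add: sum_distrib_left)
    finally show ?thesis .
  qed
  have "((\<lambda>k. A * (\<Sum>j<N. b j * (\<Sum>m<k. (w * d j * v) ^ m /\<^sub>R fact m))) \<longlongrightarrow> A * (\<Sum>j<N. b j * exp (w * d j * v))) sequentially"
  proof (intro tendsto_intros)
    fix j
    show "((\<lambda>k. \<Sum>m<k. (w * d j * v) ^ m /\<^sub>R fact m) \<longlongrightarrow> exp (w * d j * v)) sequentially"
      using exp_converges[of "w * d j * v"] by (simp add: sums_def)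
  qed
  then show ?thesis unfolding eq .
qed

lemma core_contra:
  fixes b d :: "nat \<Rightarrow> complex" and A :: complex
  assumes A: "A \<noteq> 0" and js: "js < N" "b js \<noteq> 0" and M: "M > 0" "y * Im (d js) = M"
    and others: "\<And>j. j < N \<Longrightarrow> j \<noteq> js \<Longrightarrow> b j \<noteq> 0 \<Longrightarrow> y * Im (d j) < M"
    and bound: "\<And>n::nat. cmod (A * (\<Sum>j<N. b j * exp ((- \<i> * of_nat n) * d j * of_real y))) \<le> C * exp (real n * (M / 2))"
  shows False
proof -
  define J where "J = {j. j < N \<and> j \<noteq> js \<and> b j \<noteq> 0}"
  have fJ: "finite J" unfolding J_def by simp
  define M2 where "M2 = Max (insert (M / 2) ((\<lambda>j. y * Im (d j)) ` J))"
  have M2lt: "M2 < M" unfolding M2_def using fJ M others by (auto simp: J_def)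
  have M2ge: "y * Im (d j) \<le> M2" if "j \<in> J" for j unfolding M2_def using fJ that by (intro Max_ge) auto
  have M2h: "M / 2 \<le> M2" unfolding M2_def using fJ by (intro Max_ge) auto
  define S where "S = (\<Sum>j<N. cmod (b j))"
  define e where "e = (\<lambda>n::nat. \<lambda>j. exp ((- \<i> * of_nat n) * d j * of_real y))"
  have ne: "cmod (e n j) = exp (real n * (y * Im (d j)))" for n j
    unfolding e_def by (simp add: norm_exp_eq_Re algebra_simps)
  have low: "cmod (b js) * exp (real n * M) - S * exp (real n * M2) \<le> cmod (\<Sum>j<N. b j * e n j)" for n
  proof -
    have split: "(\<Sum>j<N. b j * e n j) = b js * e n js + (\<Sum>j\<in>{..<N} - {js}. b j * e n j)"
      using js by (simp add: sum.remove)
    have "cmod (\<Sum>j\<in>{..<N} - {js}. b j * e n j) \<le> (\<Sum>j\<in>{..<N} - {js}. cmod (b j) * exp (real n * M2))"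
    proof (rule order_trans[OF norm_sum sum_mono])
      fix j assume j: "j \<in> {..<N} - {js}"
      show "cmod (b j * e n j) \<le> cmod (b j) * exp (real n * M2)"
      proof (cases "b j = 0")
        case True then show ?thesis by simp
      next
        case False
        then have "j \<in> J" using j unfolding J_def by auto
        then have "real n * (y * Im (d j)) \<le> real n * M2" using M2ge by (intro mult_left_mono) auto
        then show ?thesis unfolding norm_mult ne by (intro mult_left_mono) auto
      qed
    qed
    also have "\<dots> \<le> S * exp (real n * M2)"
      unfolding S_def sum_distrib_right[symmetric]
      by (intro mult_right_mono sum_mono2) auto
    finally have r: "cmod (\<Sum>j\<in>{..<N} - {js}. b j * e n j) \<le> S * exp (real n * M2)" .
    have "cmod (b js * e n js) = cmod (b js) * exp (real n * M)" unfolding norm_mult ne M(2) ..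
    moreover have "cmod (b js * e n js) \<le> cmod (\<Sum>j<N. b j * e n j) + cmod (\<Sum>j\<in>{..<N} - {js}. b j * e n j)"
      unfolding split using norm_triangle_sub[of "b js * e n js" "b js * e n js + (\<Sum>j\<in>{..<N} - {js}. b j * e n j)"]
      by simp
    ultimately show ?thesis using r by linarith
  qed
  have up: "cmod (\<Sum>j<N. b j * e n j) \<le> (C / cmod A) * exp (real n * (M / 2))" for n
    using bound[of n] A unfolding e_def by (simp add: norm_mult field_simps)
  have key: "cmod (b js) \<le> S * exp (- (real n * (M - M2))) + (C / cmod A) * exp (- (real n * (M / 2)))" for n
  proof -
    have "cmod (b js) * exp (real n * M) \<le> S * exp (real n * M2) + (C / cmod A) * exp (real n * (M / 2))"
      using low[of n] up[of n] by linarith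
    then have "cmod (b js) * exp (real n * M) * exp (- (real n * M)) \<le> (S * exp (real n * M2) + (C / cmod A) * exp (real n * (M / 2))) * exp (- (real n * M))"
      by (intro mult_right_mono) auto
    then show ?thesis
      by (simp add: algebra_simps exp_add[symmetric] exp_minus_inverse)
  qed
  have l1: "((\<lambda>n. exp (- (real n * (M - M2)))) \<longlongrightarrow> 0) sequentially"
  proof -
    have "((\<lambda>n. exp (- (M - M2)) ^ n) \<longlongrightarrow> 0) sequentially"
      using M2lt by (intro LIMSEQ_power_zero) auto
    moreover have "exp (- (M - M2)) ^ n = exp (- (real n * (M - M2)))" for n
      by (simp add: exp_of_nat_mult[symmetric] algebra_simps)
    ultimately show ?thesis by simp
  qed
  have l2: "((\<lambda>n. exp (- (real n * (M / 2)))) \<longlongrightarrow> 0) sequentially"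
  proof -
    have "((\<lambda>n. exp (- (M / 2)) ^ n) \<longlongrightarrow> 0) sequentially"
      using M by (intro LIMSEQ_power_zero) auto
    then show ?thesis by (simp add: exp_of_nat_mult[symmetric] mult_ac)
  qed
  have "((\<lambda>n. S * exp (- (real n * (M - M2))) + (C / cmod A) * exp (- (real n * (M / 2)))) \<longlongrightarrow> S * 0 + (C / cmod A) * 0) sequentially"
    by (intro tendsto_intros l1 l2)
  then have "eventually (\<lambda>n. S * exp (- (real n * (M - M2))) + (C / cmod A) * exp (- (real n * (M / 2))) < cmod (b js)) sequentially"
    using js by (intro order_tendstoD) auto
  then obtain n where "S * exp (- (real n * (M - M2))) + (C / cmod A) * exp (- (real n * (M / 2))) < cmod (b js)"
    by (auto simp: eventually_sequentially)
  then show False using key[of n] by linarith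
qed

lemma final_contra:
  fixes b d :: "nat \<Rightarrow> complex" and A :: complex
  assumes A: "A \<noteq> 0" and j12: "j1 < N" "j2 < N" "j1 \<noteq> j2" "b j1 \<noteq> 0" "b j2 \<noteq> 0"
    and dist: "\<And>i j. i < N \<Longrightarrow> j < N \<Longrightarrow> i \<noteq> j \<Longrightarrow> Im (d i) \<noteq> Im (d j)"
    and bound: "\<And>y \<epsilon>. y \<in> {1, -1} \<Longrightarrow> \<epsilon> > 0 \<Longrightarrow> \<exists>C. \<forall>n::nat. cmod (A * (\<Sum>j<N. b j * exp ((- \<i> * of_nat n) * d j * of_real y))) \<le> C * exp (real n * \<epsilon>)"
  shows False
proof -
  define J where "J = {j. j < N \<and> b j \<noteq> 0}"
  have fJ: "finite J" unfolding J_def by simp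
  have jJ: "j1 \<in> J" "j2 \<in> J" using j12 unfolding J_def by auto
  define Mx where "Mx = Max ((\<lambda>j. Im (d j)) ` J)"
  define Mn where "Mn = Min ((\<lambda>j. Im (d j)) ` J)"
  have neJ: "(\<lambda>j. Im (d j)) ` J \<noteq> {}" using jJ by auto
  obtain jx where jx: "jx \<in> J" "Im (d jx) = Mx" using Max_in[OF finite_imageI[OF fJ] neJ] unfolding Mx_def by auto
  obtain jn where jn: "jn \<in> J" "Im (d jn) = Mn" using Min_in[OF finite_imageI[OF fJ] neJ] unfolding Mn_def by auto
  have Mxge: "Im (d j) \<le> Mx" if "j \<in> J" for j unfolding Mx_def using fJ that by (intro Max_ge) auto
  have Mnle: "Mn \<le> Im (d j)" if "j \<in> J" for j unfolding Mn_def using fJ that by (intro Min_le) auto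
  have "Im (d j1) \<noteq> Im (d j2)" using dist j12 by blast
  then have MxMn: "Mn < Mx" using Mxge[OF jJ(1)] Mxge[OF jJ(2)] Mnle[OF jJ(1)] Mnle[OF jJ(2)] by linarith
  show False
  proof (cases "Mx > 0")
    case True
    obtain C where C: "\<forall>n::nat. cmod (A * (\<Sum>j<N. b j * exp ((- \<i> * of_nat n) * d j * of_real 1))) \<le> C * exp (real n * (Mx / 2))"
      using bound[of 1 "Mx / 2"] True by auto
    show False
    proof (rule core_contra[where A=A and js=jx and N=N and b=b and y=1 and d=d and M=Mx and C=C])
      show "A \<noteq> 0" by (rule A)
      show "jx < N" "b jx \<noteq> 0" using jx unfolding J_def by auto
      show "Mx > 0" by (rule True)
      show "1 * Im (d jx) = Mx" using jx by simp
      fix j assume "j < N" "j \<noteq> jx" "b j \<noteq> 0"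
      then have "j \<in> J" unfolding J_def by auto
      moreover have "Im (d j) \<noteq> Im (d jx)" using dist \<open>j < N\<close> \<open>j \<noteq> jx\<close> jx unfolding J_def by auto
      ultimately show "1 * Im (d j) < Mx" using Mxge jx by fastforce
    next
      fix n :: nat show "cmod (A * (\<Sum>j<N. b j * exp ((- \<i> * of_nat n) * d j * of_real 1))) \<le> C * exp (real n * (Mx / 2))"
        using C by blast
    qed
  next
    case False
    then have Mn0: "- Mn > 0" using MxMn by simp
    obtain C where C: "\<forall>n::nat. cmod (A * (\<Sum>j<N. b j * exp ((- \<i> * of_nat n) * d j * of_real (-1)))) \<le> C * exp (real n * ((- Mn) / 2))"
      using bound[of "-1" "(- Mn) / 2"] Mn0 by auto
    show False
    proof (rule core_contra[where A=A and js=jn and N=N and b=b and y="-1" and d=d and M="- Mn" and C=C])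
      show "A \<noteq> 0" by (rule A)
      show "jn < N" "b jn \<noteq> 0" using jn unfolding J_def by auto
      show "- Mn > 0" by (rule Mn0)
      show "-1 * Im (d jn) = - Mn" using jn by simp
      fix j assume "j < N" "j \<noteq> jn" "b j \<noteq> 0"
      then have "j \<in> J" unfolding J_def by auto
      moreover have "Im (d j) \<noteq> Im (d jn)" using dist \<open>j < N\<close> \<open>j \<noteq> jn\<close> jn unfolding J_def by auto
      ultimately show "-1 * Im (d j) < - Mn" using Mnle jn by fastforce
    next
      fix n :: nat show "cmod (A * (\<Sum>j<N. b j * exp ((- \<i> * of_nat n) * d j * of_real (-1)))) \<le> C * exp (real n * ((- Mn) / 2))"
        using C by blast
    qed
  qed
qed


lemma common_denom:
  fixes q :: "nat \<Rightarrow> rat"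
  shows "finite S \<Longrightarrow> \<exists>D::int. D > 0 \<and> (\<forall>k\<in>S. \<exists>z::int. of_int D * q k = of_int z)"
proof (induction S rule: finite_induct)
  case empty then show ?case by (intro exI[of _ 1]) auto
next
  case (insert x S)
  then obtain D where D: "D > 0" "\<forall>k\<in>S. \<exists>z::int. of_int D * q k = of_int z" by blast
  obtain n d where nd: "quotient_of (q x) = (n, d)" by (cases "quotient_of (q x)")
  have qx: "q x = of_int n / of_int d" by (rule quotient_of_div[OF nd])
  have d: "d > 0" by (rule quotient_of_denom_pos[OF nd])
  have "\<forall>k\<in>insert x S. \<exists>z::int. of_int (D * d) * q k = of_int z"
  proof
    fix k assume "k \<in> insert x S"
    then show "\<exists>z::int. of_int (D * d) * q k = of_int z"
    proof
      assume "k = x"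
      then show ?thesis using d by (intro exI[of _ "D * n"]) (simp add: qx)
    next
      assume "k \<in> S"
      then obtain z where "of_int D * q k = of_int z" using D by blast
      then show ?thesis by (intro exI[of _ "d * z"]) (simp flip: \<open>of_int D * q k = of_int z\<close> add: mult_ac)
    qed
  qed
  then show ?case using D d by (intro exI[of _ "D * d"]) auto
qed

lemma odd_choice:
  fixes D :: int and \<alpha> :: real
  assumes "D > 0"
  shows "\<exists>D'::int. D' > 0 \<and> (\<exists>c::int. D' = c * D) \<and> \<not> (\<exists>z::int. 4 * real_of_int D' * \<alpha> = real_of_int (2 * z + 1))"
proof (cases "\<exists>z::int. 4 * real_of_int D * \<alpha> = real_of_int (2 * z + 1)")
  case False then show ?thesis using assms by (intro exI[of _ D]) auto
next
  case True
  then obtain z where z: "4 * real_of_int D * \<alpha> = real_of_int (2 * z + 1)" by blast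
  have "\<not> (\<exists>z'::int. 4 * real_of_int (2 * D) * \<alpha> = real_of_int (2 * z' + 1))"
  proof
    assume "\<exists>z'::int. 4 * real_of_int (2 * D) * \<alpha> = real_of_int (2 * z' + 1)"
    then obtain z' where "4 * real_of_int (2 * D) * \<alpha> = real_of_int (2 * z' + 1)" by blast
    then have "real_of_int (2 * (2 * z + 1)) = real_of_int (2 * z' + 1)" using z by (simp add: algebra_simps)
    then have "2 * (2 * z + 1) = 2 * z' + 1" by (simp only: of_int_eq_iff)
    then show False by presburger
  qed
  then show ?thesis using assms by (intro exI[of _ "2 * D"]) auto
qed

lemma pow_cong_dvd:
  assumes N: "N > 0"
  shows "int N dvd (int m ^ k - int (m mod N) ^ k)"
proof -
  have "int (m mod N) = int m mod int N" by (simp add: zmod_int)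
  then have "int (m mod N) ^ k mod int N = int m ^ k mod int N" by (simp add: power_mod)
  then have "int N dvd int (m mod N) ^ k - int m ^ k" by (simp add: mod_eq_dvd_iff)
  then show ?thesis by (simp add: dvd_diff_commute)
qed

lemma Rp_periodic:
  assumes N: "N > 0"
  shows "int N dvd ((\<Sum>k\<in>S. r k * int m ^ k) - (\<Sum>k\<in>S. r k * int (m mod N) ^ k))"
proof -
  have "(\<Sum>k\<in>S. r k * int m ^ k) - (\<Sum>k\<in>S. r k * int (m mod N) ^ k) = (\<Sum>k\<in>S. r k * (int m ^ k - int (m mod N) ^ k))"
    by (simp add: sum_subtractf right_diff_distrib)
  also have "int N dvd \<dots>" using pow_cong_dvd[OF N] by (intro dvd_sum dvd_mult) auto
  finally show ?thesis .
qed

lemma nonlinear: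
  fixes r :: "nat \<Rightarrow> int"
  assumes K: "K \<ge> 2" and rK: "r K \<noteq> 0"
  defines "Rp \<equiv> (\<lambda>m::nat. \<Sum>k\<in>{2..K}. r k * int m ^ k)"
  shows "\<exists>m0. Rp (Suc m0) - Rp m0 - Rp 1 \<noteq> 0"
proof (rule ccontr)
  assume "\<not> ?thesis"
  then have E0: "Rp (Suc m) - Rp m - Rp 1 = 0" for m by blast
  have E: "Rp (Suc m) = Rp m + Rp 1" for m using E0[of m] by linarith
  have R0: "Rp 0 = 0" unfolding Rp_def by (intro sum.neutral) auto
  have lin: "Rp m = int m * Rp 1" for m
  proof (induction m)
    case 0 show ?case using R0 by simp
  next
    case (Suc m)
    have "Rp (Suc m) = Rp m + Rp 1" by (rule E)
    then show ?case using Suc by (simp add: algebra_simps)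
  qed
  define p where "p = (\<Sum>k\<in>{2..K}. monom (r k) k) - [:0, Rp 1:]"
  have roots: "poly p (int m) = 0" for m
    unfolding p_def using lin[of m] by (simp add: poly_sum poly_monom Rp_def mult_ac)
  have "p = 0"
  proof (rule ccontr)
    assume "p \<noteq> 0"
    then have "finite {x. poly p x = 0}" by (rule poly_roots_finite)
    moreover have "range int \<subseteq> {x. poly p x = 0}" using roots by auto
    ultimately have "finite (range int)" by (rule rev_finite_subset)
    then have "finite (UNIV :: nat set)" by (rule finite_imageD) (simp add: inj_on_def)
    then show False by simp
  qed
  then have "coeff p K = 0" by simp
  moreover have "coeff p K = r K"
  proof -
    define K' where "K' = K - 2"
    have K': "K = Suc (Suc K')" using K unfolding K'_def by simp
    have c1: "coeff (\<Sum>k\<in>{2..K}. monom (r k) k) K = r K" using K by (simp add: coeff_sum)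
    have c2: "coeff [:0, Rp 1:] K = 0" unfolding K' by simp
    show ?thesis unfolding p_def using c1 c2 by simp
  qed
  ultimately show False using rK by simp
qed


lemma im_distinct:
  fixes a1 :: complex and D' :: int
  assumes N: "N = 2 * h + 1" and t: "t = 2 * pi * real_of_int D' / real N"
    and nodd: "\<not> (\<exists>z::int. 4 * real_of_int D' * Im a1 = real_of_int (2 * z + 1))"
    and ij: "i < N" "j < N" "i \<noteq> j"
  shows "Im (exp (of_real t * a1) * ru N (int i)) \<noteq> Im (exp (of_real t * a1) * ru N (int j))"
proof
  define z where "z = (\<lambda>j::nat. of_real t * a1 + 2 * of_real pi * \<i> * of_int (int j) / of_nat N)"
  have dz: "exp (of_real t * a1) * ru N (int k) = exp (z k)" for k
    unfolding z_def ru_def by (simp add: exp_add)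
  have Npos: "N > 0" using N by simp
  have Rez: "Re (z k) = t * Re a1" for k unfolding z_def by simp
  have Imz: "Im (z k) = t * Im a1 + 2 * pi * real k / real N" for k unfolding z_def by simp
  assume "Im (exp (of_real t * a1) * ru N (int i)) = Im (exp (of_real t * a1) * ru N (int j))"
  then have imeq: "Im (exp (z i)) = Im (exp (z j))" unfolding dz .
  have "cmod (exp (z i)) = cmod (exp (z j))" by (simp add: norm_exp_eq_Re Rez)
  then have "cmod (exp (z i)) ^ 2 = cmod (exp (z j)) ^ 2" by simp
  moreover have "cmod (exp (z i)) ^ 2 = Re (exp (z i)) ^ 2 + Im (exp (z i)) ^ 2" by (rule cmod_power2)
  moreover have "cmod (exp (z j)) ^ 2 = Re (exp (z j)) ^ 2 + Im (exp (z j)) ^ 2" by (rule cmod_power2)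
  ultimately have "Re (exp (z i)) ^ 2 = Re (exp (z j)) ^ 2" using imeq by simp
  then have "Re (exp (z i)) = Re (exp (z j)) \<or> Re (exp (z i)) = - Re (exp (z j))"
    by (simp add: power2_eq_iff)
  then show False
  proof
    assume "Re (exp (z i)) = Re (exp (z j))"
    then have "exp (z i) = exp (z j)" using imeq by (simp add: complex_eq_iff)
    then have "ru N (int i) = ru N (int j)" unfolding dz[symmetric] by simp
    then have "int N dvd (int i - int j)" using ru_eq_iff[OF Npos] by blast
    moreover have "int i - int j \<noteq> 0" using ij by simp
    ultimately have "\<bar>int N\<bar> \<le> \<bar>int i - int j\<bar>" by (intro dvd_imp_le_int) auto
    then show False using ij by linarith
  next
    assume re: "Re (exp (z i)) = - Re (exp (z j))"
    have "exp (z i) = - cnj (exp (z j))" using re imeq by (simp add: complex_eq_iff)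
    also have "\<dots> = exp (cnj (z j) + of_real pi * \<i>)" by (simp add: exp_add exp_cnj)
    finally obtain n :: int where n: "z i = cnj (z j) + of_real pi * \<i> + complex_of_real (real_of_int (2 * n) * pi) * \<i>"
      unfolding exp_eq by blast
    have "Im (z i) = Im (cnj (z j) + of_real pi * \<i> + complex_of_real (real_of_int (2 * n) * pi) * \<i>)"
      using n by simp
    then have e1: "t * Im a1 + 2 * pi * real i / real N = - (t * Im a1 + 2 * pi * real j / real N) + pi + 2 * real_of_int n * pi"
      by (simp add: Imz)
    have e2: "pi * (4 * real_of_int D' * Im a1) = pi * (real N * (2 * real_of_int n + 1) - 2 * real i - 2 * real j)"
      using e1 Npos unfolding t by (simp add: field_simps)
    have "4 * real_of_int D' * Im a1 = real N * (2 * real_of_int n + 1) - 2 * real i - 2 * real j"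
      using e2 pi_gt_zero by simp
    also have "\<dots> = real_of_int (2 * (2 * int h * n + int h + n - int i - int j) + 1)"
      unfolding N by (simp add: algebra_simps)
    finally show False using nodd by blast
  qed
qed


lemma atMost_split2: "(K::nat) \<ge> 2 \<Longrightarrow> {..K} = insert 0 (insert 1 {2..K})"
  by auto

lemma case2:
  assumes gen: "generates (poly_euler a K) T" and K: "K \<ge> 2" and aK: "a K \<noteq> 0"
    and rat: "\<forall>k. 2 \<le> k \<and> k \<le> K \<longrightarrow> (\<exists>q::rat. a k = \<i> * of_rat q)"
  shows False
proof -
  have "\<forall>k. \<exists>q::rat. 2 \<le> k \<and> k \<le> K \<longrightarrow> a k = \<i> * of_rat q" using rat by blast
  then obtain q where q: "\<And>k. 2 \<le> k \<Longrightarrow> k \<le> K \<Longrightarrow> a k = \<i> * of_rat (q k)" by (metis choice)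
  obtain D where D: "D > 0" "\<forall>k\<in>{2..K}. \<exists>z::int. of_int D * q k = of_int z"
    using common_denom[of "{2..K}" q] by auto
  obtain D' where D': "D' > 0" "\<exists>c::int. D' = c * D"
      "\<not> (\<exists>z::int. 4 * real_of_int D' * Im (a 1) = real_of_int (2 * z + 1))"
    using odd_choice[OF D(1), of "Im (a 1)"] by blast
  have "\<forall>k. \<exists>z::int. k \<in> {2..K} \<longrightarrow> of_int D' * q k = of_int z"
  proof
    fix k
    show "\<exists>z::int. k \<in> {2..K} \<longrightarrow> of_int D' * q k = of_int z"
    proof (cases "k \<in> {2..K}")
      case True
      then obtain z where z: "of_int D * q k = of_int z" using D by blast
      obtain c where c: "D' = c * D" using D' by blast
      have "of_int D' * q k = of_int (c * z)" unfolding c using z by (simp flip: z add: mult_ac)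
      then show ?thesis by blast
    qed auto
  qed
  then obtain r where r: "\<And>k. k \<in> {2..K} \<Longrightarrow> of_int D' * q k = of_int (r k)" by (metis choice)
  have rc: "of_rat (q k) = (of_int (r k) / of_int D' :: complex)" if "k \<in> {2..K}" for k
  proof -
    have "of_rat (of_int D' * q k) = (of_rat (of_int (r k)) :: complex)" using r[OF that] by simp
    then have "of_int D' * of_rat (q k) = (of_int (r k) :: complex)" by (simp add: of_rat_mult)
    then show ?thesis using D'(1) by (simp add: field_simps)
  qed
  have rK: "r K \<noteq> 0"
  proof
    assume "r K = 0"
    then have "of_rat (q K) = (0::complex)" using rc[of K] K by simp
    then show False using q[of K] K aK by simp
  qed
  define Rp where "Rp = (\<lambda>m::nat. \<Sum>k\<in>{2..K}. r k * int m ^ k)"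
  obtain m0 where m0: "Rp (Suc m0) - Rp m0 - Rp 1 \<noteq> 0"
    using nonlinear[where K=K and r=r, OF K rK] unfolding Rp_def by blast
  define E where "E = Rp (Suc m0) - Rp m0 - Rp 1"
  define h where "h = nat \<bar>E\<bar>"
  define N where "N = 2 * h + 1"
  have Npos: "N > 0" unfolding N_def by simp
  have ndvd: "\<not> int N dvd E"
  proof
    assume "int N dvd E"
    then have "\<bar>int N\<bar> \<le> \<bar>E\<bar>" using m0 unfolding E_def by (intro dvd_imp_le_int) auto
    then show False unfolding N_def h_def by simp
  qed
  define t where "t = 2 * pi * real_of_int D' / real N"
  have tpos: "t > 0" unfolding t_def using D'(1) Npos by simp
  define c where "c = (\<lambda>m. ru N (Rp m))"
  have per: "c m = c (m mod N)" for m
    unfolding c_def Rp_def using Rp_periodic[OF Npos, where S="{2..K}" and r=r and m=m] ru_eq_iff[OF Npos] by blast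
  define b where "b = dftc N c"
  define A where "A = exp (of_real t * a 0)"
  define lam where "lam = exp (of_real t * a 1)"
  define d where "d = (\<lambda>j. lam * ru N (int j))"
  have keyid: "exp (of_real t * Pval a K m) = A * lam ^ m * c m" for m
  proof -
    have s2: "of_real t * (\<Sum>k\<in>{2..K}. a k * of_nat m ^ k) = 2 * of_real pi * \<i> * of_int (Rp m) / of_nat N"
    proof -
      have "of_real t * (\<Sum>k\<in>{2..K}. a k * of_nat m ^ k) = (\<Sum>k\<in>{2..K}. 2 * of_real pi * \<i> * of_int (r k * int m ^ k) / of_nat N)"
        unfolding sum_distrib_left
      proof (intro sum.cong refl)
        fix k assume k: "k \<in> {2..K}"
        show "of_real t * (a k * of_nat m ^ k) = 2 * of_real pi * \<i> * of_int (r k * int m ^ k) / of_nat N"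
          using q[of k] rc[OF k] k D'(1) Npos unfolding t_def by (simp add: field_simps)
      qed
      also have "\<dots> = 2 * of_real pi * \<i> * of_int (Rp m) / of_nat N"
        unfolding Rp_def of_int_sum sum_divide_distrib sum_distrib_left ..
      finally show ?thesis .
    qed
    have "Pval a K m = a 0 + a 1 * of_nat m + (\<Sum>k\<in>{2..K}. a k * of_nat m ^ k)"
      unfolding Pval_def atMost_split2[OF K] by simp
    then have "of_real t * Pval a K m = of_real t * a 0 + of_nat m * (of_real t * a 1) + 2 * of_real pi * \<i> * of_int (Rp m) / of_nat N"
      using s2 by (simp add: algebra_simps)
    then show ?thesis unfolding A_def lam_def c_def ru_def by (simp add: exp_add exp_of_nat_mult)
  qed
  have dft: "c m = (\<Sum>j<N. b j * ru N (int j * int m))" for m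
    unfolding b_def by (rule dft_inv[where c=c and N=N, OF Npos per])
  have mu: "exp (of_real t * Pval a K m) = A * (\<Sum>j<N. b j * d j ^ m)" for m
  proof -
    have f1: "A * (\<Sum>j<N. b j * d j ^ m) = A * lam ^ m * (\<Sum>j<N. b j * ru N (int j * int m))"
      unfolding d_def sum_distrib_left
      by (intro sum.cong refl) (simp add: power_mult_distrib ru_mult_nat[of N m, symmetric] mult_ac)
    have f2: "exp (of_real t * Pval a K m) = A * lam ^ m * (\<Sum>j<N. b j * ru N (int j * int m))"
      using keyid[of m] dft[of m] by simp
    show ?thesis by (rule trans[OF f2 f1[symmetric]])
  qed
  have c0: "c 0 = 1" unfolding c_def Rp_def ru_def by simp
  have two: "\<exists>j1 j2. j1 < N \<and> j2 < N \<and> j1 \<noteq> j2 \<and> b j1 \<noteq> 0 \<and> b j2 \<noteq> 0"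
  proof (rule ccontr)
    assume nt: "\<not> ?thesis"
    have "\<exists>j1<N. b j1 \<noteq> 0"
    proof (rule ccontr)
      assume "\<not> ?thesis"
      then have "c 0 = 0" using dft[of 0] by simp
      then show False using c0 by simp
    qed
    then obtain j1 where j1: "j1 < N" "b j1 \<noteq> 0" by blast
    have z: "b j = 0" if "j < N" "j \<noteq> j1" for j using nt j1 that by blast
    have cm: "c m = b j1 * ru N (int j1) ^ m" for m
    proof -
      have "c m = (\<Sum>j<N. b j * ru N (int j * int m))" by (rule dft)
      also have "\<dots> = b j1 * ru N (int j1 * int m) + (\<Sum>j\<in>{..<N} - {j1}. b j * ru N (int j * int m))"
        using j1 by (simp add: sum.remove)
      also have "(\<Sum>j\<in>{..<N} - {j1}. b j * ru N (int j * int m)) = 0"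
        using z by (intro sum.neutral) auto
      finally show ?thesis by (simp add: ru_mult_nat[of N m, symmetric] mult.commute)
    qed
    have "c (Suc m0) * c 0 = c 1 * c m0" unfolding cm by (simp add: power_add[symmetric] algebra_simps)
    then have "ru N (Rp (Suc m0) + Rp 0) = ru N (Rp 1 + Rp m0)" unfolding c_def ru_add by simp
    then have "int N dvd (Rp (Suc m0) + Rp 0 - (Rp 1 + Rp m0))" using ru_eq_iff[OF Npos] by blast
    moreover have "Rp 0 = 0" unfolding Rp_def by (intro sum.neutral) auto
    ultimately show False using ndvd unfolding E_def by (simp add: algebra_simps)
  qed
  then obtain j1 j2 where j12: "j1 < N" "j2 < N" "j1 \<noteq> j2" "b j1 \<noteq> 0" "b j2 \<noteq> 0" by blast
  have dist: "Im (d i) \<noteq> Im (d j)" if "i < N" "j < N" "i \<noteq> j" for i j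
    unfolding d_def lam_def using im_distinct[OF N_def t_def D'(3) that] .
  have lin: "cont_linear_op (T t)" using gen tpos unfolding generates_def C0_semigroup_def by auto
  have mufun: "T t (mono_fn m) = (\<lambda>x. exp (of_real t * Pval a K m) * mono_fn m x)" for m
    using gen_mono[OF gen, of t m] tpos by auto
  have bound: "\<exists>C. \<forall>n::nat. cmod (A * (\<Sum>j<N. b j * exp ((- \<i> * of_nat n) * d j * of_real y))) \<le> C * exp (real n * \<epsilon>)"
    if "y \<in> {1, -1}" "\<epsilon> > 0" for y \<epsilon>
  proof (rule strip_bound[OF lin mufun _ \<open>\<epsilon> > 0\<close>])
    fix n :: nat
    show "((\<lambda>k. \<Sum>m<k. ((- \<i> * of_nat n) ^ m /\<^sub>R fact m) * exp (of_real t * Pval a K m) * (complex_of_real y) ^ m)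
        \<longlongrightarrow> A * (\<Sum>j<N. b j * exp ((- \<i> * of_nat n) * d j * of_real y))) sequentially"
      by (rule conv_lemma) (rule mu)
  qed
  have A0: "A \<noteq> 0" unfolding A_def by simp
  show False by (rule final_contra[OF A0 j12 dist bound]) auto
qed


theorem mainTheorem7:
  fixes a :: "nat \<Rightarrow> complex" and K :: nat
  assumes "K \<ge> 2" and "a K \<noteq> 0"
    and "(\<exists>l. 2 \<le> l \<and> l \<le> K \<and> (\<forall>k. l < k \<and> k \<le> K \<longrightarrow> Re (a k) = 0) \<and> Re (a l) > 0)
         \<or> (\<forall>k. 2 \<le> k \<and> k \<le> K \<longrightarrow> (\<exists>q::rat. a k = \<i> * of_rat q))"
  shows "\<not> (\<exists>T. generates (poly_euler a K) T)"
proof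
  assume "\<exists>T. generates (poly_euler a K) T"
  then obtain T where gen: "generates (poly_euler a K) T" by blast
  from assms(3) show False
  proof
    assume "\<exists>l. 2 \<le> l \<and> l \<le> K \<and> (\<forall>k. l < k \<and> k \<le> K \<longrightarrow> Re (a k) = 0) \<and> Re (a l) > 0"
    then obtain l where l: "2 \<le> l" "l \<le> K" "\<forall>k. l < k \<and> k \<le> K \<longrightarrow> Re (a k) = 0" "Re (a l) > 0" by blast
    show False by (rule case1[OF gen l])
  next
    assume "\<forall>k. 2 \<le> k \<and> k \<le> K \<longrightarrow> (\<exists>q::rat. a k = \<i> * of_rat q)"
    then show False by (rule case2[OF gen assms(1) assms(2)])
  qed
qed

end
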